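(* Let $\varepsilon>0$, let $\Omega\subset\mathbb{R}$ be a bounded set with $\operatorname{diam}(\Omega)=D$, and let $\mathcal{X},\mathcal{Y}\subset\Omega$ be disjoint. For $n\ge 0$ and $t\in\mathbb{R}$ define $$\alpha_n(t)=\frac{2^n\varepsilon^{2n}e^{-\varepsilon^2t^2}t^n}{n!},\qquad \beta_n(t)=e^{-\varepsilon^2t^2}t^n .$$ Let $\delta>0$. If the integer $r\ge 0$ satisfies $$r>\max\Big\{\log_2\!\Big(\frac{e^{2\varepsilon^2D^2}}{\delta}\Big)-1,\; 12\varepsilon^2D^2-1\Big\},$$ then for every $\bar x\in\mathcal{X}$, every $x\in\mathcal{X}$ and every $y\in\mathcal{Y}$, $$\Big|e^{-\varepsilon^2(x-y)^2}-\sum_{n=0}^{r}\alpha_n(x-\bar x)\,\beta_n(y-\bar x)\Big|<\delta .$$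
   Context: Here $\operatorname{diam}(\Omega)=\sup_{u,v\in\Omega}|u-v|$. Note that $\sum_{n=0}^\infty\alpha_n(x-\bar x)\beta_n(y-\bar x)=e^{-\varepsilon^2(x-y)^2}$ (Taylor expansion of the exponential). *)

theory Defs
  imports "HOL-Analysis.Analysis"
begin

definition alpha_n :: "real \<Rightarrow> nat \<Rightarrow> real \<Rightarrow> real" where
  "alpha_n \<epsilon> n t = (2 ^ n * \<epsilon> ^ (2 * n) * exp (- (\<epsilon>\<^sup>2 * t\<^sup>2)) * t ^ n) / fact n"

definition beta_n :: "real \<Rightarrow> nat \<Rightarrow> real \<Rightarrow> real" where
  "beta_n \<epsilon> n t = exp (- (\<epsilon>\<^sup>2 * t\<^sup>2)) * t ^ n"

end

theory Submission
  imports Defs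
begin

lemma term_le_exp: fixes x :: real assumes "x \<ge> 0" shows "x^n / fact n \<le> exp x"
proof -
  have s: "(\<lambda>n. x^n / fact n) sums exp x" using exp_converges[of x] by (simp add: divide_inverse_commute scaleR_conv_of_real)
  have "sum (\<lambda>n. x^n / fact n) {n} \<le> suminf (\<lambda>n. x^n / fact n)"
    by (rule sum_le_suminf) (use s assms in \<open>auto simp: sums_summable\<close>)
  then show ?thesis using s sums_unique by fastforce
qed

lemma fact_lb: "(real N / 3)^N \<le> fact N"
proof (cases "N = 0")
  case True then show ?thesis by simp
next
  case False
  have "real N ^ N / fact N \<le> exp (real N)" by (rule term_le_exp) simp
  hence "real N ^ N \<le> exp (real N) * fact N" by (simp add: divide_le_eq)
  also have "exp (real N) = exp 1 ^ N" by (simp add: exp_of_nat_mult[symmetric])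
  also have "\<dots> \<le> 3 ^ N" using exp_le by (intro power_mono) auto
  finally have "real N ^ N \<le> 3^N * fact N" by (simp add: mult_right_mono)
  then show ?thesis by (simp add: power_divide divide_le_eq mult.commute)
qed

lemma fact_add_ge: "fact n * fact N \<le> (fact (n+N) :: real)"
proof -
  have eq: "fact N * fact n * real ((n+N) choose N) = fact (n+N)"
    using binomial_fact_lemma[of N "n+N"] by (metis of_nat_fact of_nat_mult le_add2 add_diff_cancel_right')
  have "(n+N) choose N \<ge> 1" by (simp add: Suc_le_eq)
  hence "real ((n+N) choose N) \<ge> 1" by simp
  moreover have "fact N * fact n \<ge> (0::real)" by simp
  ultimately have "fact N * fact n * 1 \<le> fact N * fact n * real ((n+N) choose N)"
    by (intro mult_left_mono) auto
  with eq show ?thesis by (simp add: mult.commute)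
qed

lemma tail_bound:
  fixes z c :: real and N :: nat
  assumes zc: "\<bar>z\<bar> \<le> c" and cN: "6 * c < real N"
  shows "\<bar>exp z - (\<Sum>n<N. z^n / fact n)\<bar> \<le> exp c / 2^N"
proof -
  have c0: "c \<ge> 0" using zc by linarith
  define f where "f n = z^n / fact n" for n
  define g where "g n = (c^n / fact n) / 2^N" for n
  have fs: "f sums exp z" using exp_converges[of z] unfolding f_def
    by (simp add: divide_inverse_commute scaleR_conv_of_real)
  have ts: "(\<lambda>i. f (i + N)) sums (exp z - (\<Sum>i<N. f i))"
    using sums_iff_shift[of f N "exp z - (\<Sum>i<N. f i)"] fs by simp
  have gs: "g sums (exp c / 2^N)" unfolding g_def
    using exp_converges[of c] by (intro sums_divide) (simp add: divide_inverse_commute scaleR_conv_of_real)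
  have cNf: "c^N * 2^N \<le> fact N"
  proof -
    have "c^N * 2^N = (2*c)^N" by (simp add: power_mult_distrib mult.commute)
    also have "\<dots> \<le> (real N / 3)^N" using c0 cN by (intro power_mono) auto
    also have "\<dots> \<le> fact N" by (rule fact_lb)
    finally show ?thesis .
  qed
  have cN2: "c^N / fact N \<le> 1 / 2^N" using cNf by (simp add: field_simps)
  have le: "\<bar>f (i + N)\<bar> \<le> g i" for i
  proof -
    have "\<bar>f (i + N)\<bar> = \<bar>z\<bar>^(i+N) / fact (i+N)" by (simp add: f_def abs_divide power_abs)
    also have "\<dots> \<le> c^(i+N) / fact (i+N)" using zc
      by (intro divide_right_mono power_mono) auto
    also have "\<dots> \<le> c^(i+N) / (fact i * fact N)"
      by (rule divide_left_mono[OF fact_add_ge]) (auto simp: c0)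
    also have "\<dots> = (c^i / fact i) * (c^N / fact N)" by (simp add: power_add)
    also have "\<dots> \<le> (c^i / fact i) * (1 / 2^N)"
      using cN2 c0 by (intro mult_left_mono) auto
    also have "\<dots> = g i" by (simp add: g_def)
    finally show ?thesis .
  qed
  have sa: "summable (\<lambda>i. \<bar>f (i + N)\<bar>)"
    by (rule summable_comparison_test'[OF sums_summable[OF gs], of 0]) (simp add: le)
  have "\<bar>exp z - (\<Sum>i<N. f i)\<bar> = \<bar>suminf (\<lambda>i. f (i + N))\<bar>" using ts sums_unique by metis
  also have "\<dots> \<le> (\<Sum>i. \<bar>f (i + N)\<bar>)" by (rule summable_rabs[OF sa])
  also have "\<dots> \<le> suminf g" by (rule suminf_le[OF le sa sums_summable[OF gs]])
  also have "\<dots> = exp c / 2^N" using gs sums_unique by metis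
  finally show ?thesis by (simp add: f_def)
qed

theorem lemma1:
  fixes \<epsilon> D \<delta> :: real and \<Omega> X Y :: "real set" and r :: nat
  assumes "\<epsilon> > 0"
    and "bounded \<Omega>" and "diameter \<Omega> = D"
    and "X \<subseteq> \<Omega>" and "Y \<subseteq> \<Omega>" and "X \<inter> Y = {}"
    and "\<delta> > 0"
    and "real r > max (log 2 (exp (2 * \<epsilon>\<^sup>2 * D\<^sup>2) / \<delta>) - 1) (12 * \<epsilon>\<^sup>2 * D\<^sup>2 - 1)"
  shows "\<forall>xbar\<in>X. \<forall>x\<in>X. \<forall>y\<in>Y.
    \<bar>exp (- (\<epsilon>\<^sup>2 * (x - y)\<^sup>2)) - (\<Sum>n = 0..r. alpha_n \<epsilon> n (x - xbar) * beta_n \<epsilon> n (y - xbar))\<bar> < \<delta>"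
proof (intro ballI)
  fix xbar x y assume xb: "xbar \<in> X" and xX: "x \<in> X" and yY: "y \<in> Y"
  define a where "a = x - xbar"
  define b where "b = y - xbar"
  define c where "c = 2 * \<epsilon>\<^sup>2 * D\<^sup>2"
  define z where "z = 2 * \<epsilon>\<^sup>2 * a * b"
  define E where "E = exp (- (\<epsilon>\<^sup>2 * a\<^sup>2)) * exp (- (\<epsilon>\<^sup>2 * b\<^sup>2))"
  define N where "N = Suc r"
  have aD: "\<bar>a\<bar> \<le> D" using diameter_bounded_bound[OF assms(2), of x xbar] xb xX assms(3,4)
    by (auto simp: a_def dist_real_def)
  have bD: "\<bar>b\<bar> \<le> D" using diameter_bounded_bound[OF assms(2), of y xbar] xb yY assms(3,4,5)
    by (auto simp: b_def dist_real_def)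
  have e2: "\<epsilon>\<^sup>2 \<ge> 0" by simp
  have "\<bar>a * b\<bar> \<le> D * D" unfolding abs_mult using aD bD by (intro mult_mono) auto
  hence zc0: "2 * \<epsilon>\<^sup>2 * \<bar>a * b\<bar> \<le> 2 * \<epsilon>\<^sup>2 * (D * D)" using e2 by (intro mult_left_mono) auto
  have "\<bar>z\<bar> = 2 * \<epsilon>\<^sup>2 * \<bar>a * b\<bar>" by (simp add: z_def abs_mult mult.assoc)
  hence zc: "\<bar>z\<bar> \<le> c" using zc0 by (simp add: c_def power2_eq_square)
  have cN: "6 * c < real N" using assms(8) by (simp add: c_def N_def)
  have lg: "log 2 (exp c / \<delta>) < real N" using assms(8) by (simp add: c_def N_def)
  have "exp c / \<delta> < 2 powr real N"
    using lg assms(7) by (subst (asm) log_less_iff) auto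
  hence "exp c / \<delta> < 2 ^ N" by (simp add: powr_realpow)
  hence cd: "exp c / 2 ^ N < \<delta>" using assms(7) by (simp add: field_simps)
  have xy: "x - y = a - b" by (simp add: a_def b_def)
  have id1: "exp (- (\<epsilon>\<^sup>2 * (x - y)\<^sup>2)) = E * exp z"
    unfolding xy E_def z_def exp_add[symmetric] by (rule arg_cong[where f=exp]) (simp add: power2_eq_square algebra_simps)
  have pe: "(\<epsilon> ^ n)\<^sup>2 = (\<epsilon>\<^sup>2) ^ n" for n
    by (simp add: power_mult[symmetric] mult.commute)
  have id2: "alpha_n \<epsilon> n a * beta_n \<epsilon> n b = E * (z^n / fact n)" for n
    unfolding alpha_n_def beta_n_def E_def z_def
    by (simp add: power_mult_distrib power_mult field_simps pe)
  have sidx: "{0..r} = {..<N}" by (auto simp: N_def)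
  have "(\<Sum>n = 0..r. alpha_n \<epsilon> n (x - xbar) * beta_n \<epsilon> n (y - xbar)) = E * (\<Sum>n<N. z^n / fact n)"
    unfolding sidx a_def[symmetric] b_def[symmetric] id2 by (simp add: sum_distrib_left)
  hence "\<bar>exp (- (\<epsilon>\<^sup>2 * (x - y)\<^sup>2)) - (\<Sum>n = 0..r. alpha_n \<epsilon> n (x - xbar) * beta_n \<epsilon> n (y - xbar))\<bar>
     = E * \<bar>exp z - (\<Sum>n<N. z^n / fact n)\<bar>"
    unfolding id1 by (simp add: right_diff_distrib[symmetric] abs_mult E_def)
  also have "\<dots> \<le> 1 * \<bar>exp z - (\<Sum>n<N. z^n / fact n)\<bar>"
  proof (intro mult_right_mono)
    have h1: "0 \<le> \<epsilon>\<^sup>2 * a\<^sup>2" by simp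
    have h2: "0 \<le> \<epsilon>\<^sup>2 * b\<^sup>2" by simp
    have "- (\<epsilon>\<^sup>2 * a\<^sup>2) + - (\<epsilon>\<^sup>2 * b\<^sup>2) \<le> 0" using h1 h2 by linarith
    thus "E \<le> 1" unfolding E_def exp_add[symmetric] by simp
  qed simp
  also have "\<dots> \<le> exp c / 2^N" using tail_bound[OF zc cN] by simp
  also have "\<dots> < \<delta>" by (rule cd)
  finally show "\<bar>exp (- (\<epsilon>\<^sup>2 * (x - y)\<^sup>2)) - (\<Sum>n = 0..r. alpha_n \<epsilon> n (x - xbar) * beta_n \<epsilon> n (y - xbar))\<bar> < \<delta>" .
qed

end
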